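(* Let $d>k\geq1$, $\varepsilon\in(0,1)$, $A\succeq0$ symmetric with $\lambda_k>\lambda_{k+1}$, $\beta>0$ with $\lambda_k>2\sqrt\beta\geq\lambda_{k+1}$, $X_0\in\mathrm{St}(d,k)$ with $\cos\theta_k(U_k,X_0)>0$, and ANPM perturbations satisfying for all $t\geq0$: $\|U_{-k}^\top\Xi_t\|_2\leq c(\lambda_k-2\sqrt\beta)\varepsilon$ and $\|U_k^\top\Xi_t\|_2\leq c(\lambda_k-2\sqrt\beta)\cos\theta_k(U_k,X_t)$, $c=1/32$. Then for all $t\geq1$ and all $s\in\{0,\dots,t-1\}$, $$\|C_t^{-1}\|_2\leq\frac{c_1}{((1-c)\lambda_k^++c\sqrt\beta)^t},\quad \|C_{t-1-s}C_t^{-1}\|_2\leq\frac{c_1}{((1-c)\lambda_k^++c\sqrt\beta)^{s+1}},$$ $$\|p_t(\Lambda_{-k})\|_2\leq\sqrt\beta^{\,t},\quad \|q_t(\Lambda_{-k})\|_2\leq(t+1)\sqrt\beta^{\,t},$$ where $c_1:=31/15$ and $\lambda_k^+:=\frac{\lambda_k+\sqrt{\lambda_k^2-4\beta}}{2}$.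
   Context: $A$ has eigenvalues $\lambda_1\geq\dots\geq\lambda_d\geq0$, orthonormal eigenvectors $u_i$; $U_k:=[u_1..u_k]$, $U_{-k}:=[u_{k+1}..u_d]$, $\Lambda_k:=\mathrm{diag}(\lambda_1..\lambda_k)$, $\Lambda_{-k}:=\mathrm{diag}(\lambda_{k+1}..\lambda_d)$. QR: $Y=XR$, $X^\top X=I_k$, $R$ upper triangular, nonnegative diagonal; $\theta_k(U,X):=\arccos\sigma_{\min}(U^\top X)$. ANPM: $(X_1,R_1)=\mathrm{QR}(\tfrac12AX_0+\Xi_0)$; for $t\geq1$, $Y_{t+1}=AX_t-\beta X_{t-1}R_t^{-1}+\Xi_t$, $(X_{t+1},R_{t+1})=\mathrm{QR}(Y_{t+1})$. $E_t:=\Lambda_k^{-1}(U_k^\top\Xi_t)(U_k^\top X_t)^{-1}$; $G_0:=(I_k/2+E_0)^{-1}$, $G_{t+1}:=(I_k-\beta\Lambda_k^{-1}G_t\Lambda_k^{-1}+E_{t+1})^{-1}$; $C_0:=I_k$, $C_t:=\Lambda_kG_{t-1}^{-1}\Lambda_kG_{t-2}^{-1}\cdots\Lambda_kG_0^{-1}$. Polynomials: $p_0=1$, $p_1(x)=x/2$, $p_{t+1}=xp_t-\beta p_{t-1}$; $q_0=1$, $q_1(x)=x$, $q_{t+1}=xq_t-\beta q_{t-1}$. *)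

theory Defs
  imports Complex_Main "Jordan_Normal_Form.Matrix"
begin

definition vnorm :: "real vec \<Rightarrow> real" where
  "vnorm v = sqrt (scalar_prod v v)"

definition spec_norm :: "real mat \<Rightarrow> real" where
  "spec_norm M = Sup {vnorm (M *\<^sub>v x) | x. x \<in> carrier_vec (dim_col M) \<and> vnorm x \<le> 1}"

definition sigma_min :: "real mat \<Rightarrow> real" where
  "sigma_min M = Inf {vnorm (M *\<^sub>v x) | x. x \<in> carrier_vec (dim_col M) \<and> vnorm x = 1}"

definition cos_theta :: "real mat \<Rightarrow> real mat \<Rightarrow> real" where
  "cos_theta U X = cos (arccos (sigma_min (U\<^sup>T * X)))"

(* matrix inverse (total: zero matrix if not invertible) *)
definition minv :: "real mat \<Rightarrow> real mat" where
  "minv M = (if \<exists>N. N \<in> carrier_mat (dim_row M) (dim_row M) \<and> inverts_mat M N \<and> inverts_mat N M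
             then (SOME N. N \<in> carrier_mat (dim_row M) (dim_row M) \<and> inverts_mat M N \<and> inverts_mat N M)
             else 0\<^sub>m (dim_row M) (dim_row M))"

definition is_QR :: "real mat \<Rightarrow> real mat \<Rightarrow> real mat \<Rightarrow> bool" where
  "is_QR Y X R \<longleftrightarrow> X \<in> carrier_mat (dim_row Y) (dim_col Y) \<and> R \<in> carrier_mat (dim_col Y) (dim_col Y)
     \<and> Y = X * R \<and> X\<^sup>T * X = 1\<^sub>m (dim_col Y) \<and> upper_triangular R \<and> (\<forall>i < dim_col Y. R $$ (i,i) \<ge> 0)"

(* U_k = [u_1 .. u_k] and U_{-k} = [u_{k+1} .. u_d] (columns of U, 0-indexed) *)
definition Ufirst :: "real mat \<Rightarrow> nat \<Rightarrow> real mat" where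
  "Ufirst U k = mat (dim_row U) k (\<lambda>(i,j). U $$ (i,j))"

definition Urest :: "real mat \<Rightarrow> nat \<Rightarrow> real mat" where
  "Urest U k = mat (dim_row U) (dim_col U - k) (\<lambda>(i,j). U $$ (i, k + j))"

(* Lambda_k = diag(lambda_1..lambda_k), Lambda_{-k} = diag(lambda_{k+1}..lambda_d); lam is 1-indexed *)
definition Lfirst :: "(nat \<Rightarrow> real) \<Rightarrow> nat \<Rightarrow> real mat" where
  "Lfirst lam k = mat k k (\<lambda>(i,j). if i = j then lam (i + 1) else 0)"

definition Lrest :: "(nat \<Rightarrow> real) \<Rightarrow> nat \<Rightarrow> nat \<Rightarrow> real mat" where
  "Lrest lam d k = mat (d - k) (d - k) (\<lambda>(i,j). if i = j then lam (k + 1 + i) else 0)"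

definition Emat :: "real mat \<Rightarrow> real mat \<Rightarrow> real mat \<Rightarrow> real mat \<Rightarrow> real mat" where
  "Emat L Uk Xi X = minv L * (Uk\<^sup>T * Xi) * minv (Uk\<^sup>T * X)"

fun Gmat :: "real \<Rightarrow> real mat \<Rightarrow> (nat \<Rightarrow> real mat) \<Rightarrow> nat \<Rightarrow> real mat" where
  "Gmat beta L E 0 = minv ((1/2) \<cdot>\<^sub>m 1\<^sub>m (dim_row L) + E 0)"
| "Gmat beta L E (Suc t) =
     minv (1\<^sub>m (dim_row L) - beta \<cdot>\<^sub>m (minv L * Gmat beta L E t * minv L) + E (Suc t))"

fun Cmat :: "real mat \<Rightarrow> (nat \<Rightarrow> real mat) \<Rightarrow> nat \<Rightarrow> real mat" where
  "Cmat L G 0 = 1\<^sub>m (dim_row L)"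
| "Cmat L G (Suc t) = L * minv (G t) * Cmat L G t"

fun pmat :: "real \<Rightarrow> real mat \<Rightarrow> nat \<Rightarrow> real mat" where
  "pmat beta M 0 = 1\<^sub>m (dim_row M)"
| "pmat beta M (Suc 0) = (1/2) \<cdot>\<^sub>m M"
| "pmat beta M (Suc (Suc t)) = M * pmat beta M (Suc t) - beta \<cdot>\<^sub>m pmat beta M t"

fun qmat :: "real \<Rightarrow> real mat \<Rightarrow> nat \<Rightarrow> real mat" where
  "qmat beta M 0 = 1\<^sub>m (dim_row M)"
| "qmat beta M (Suc 0) = M"
| "qmat beta M (Suc (Suc t)) = M * qmat beta M (Suc t) - beta \<cdot>\<^sub>m qmat beta M t"

end

theory Submission
  imports Defs "HOL-Analysis.L2_Norm" "Jordan_Normal_Form.Determinant"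
begin


lemma vnorm_L2: "vnorm v = L2_set (\<lambda>i. v $ i) {0..<dim_vec v}"
  unfolding vnorm_def L2_set_def scalar_prod_def power2_eq_square by simp

lemma vnorm_nonneg[simp]: "vnorm v \<ge> 0"
  unfolding vnorm_L2 by (rule L2_set_nonneg)

lemma vnorm_sq: "vnorm v ^ 2 = (\<Sum>i<dim_vec v. (v $ i)^2)"
  unfolding vnorm_L2 L2_set_def by (simp add: sum_nonneg atLeast0LessThan)

lemma vnorm_add: assumes "dim_vec v = dim_vec w" shows "vnorm (v + w) \<le> vnorm v + vnorm w"
proof -
  have "vnorm (v + w) = L2_set (\<lambda>i. v $ i + w $ i) {0..<dim_vec w}"
    unfolding vnorm_L2 by (rule L2_set_cong, auto)
  also have "\<dots> \<le> vnorm v + vnorm w" unfolding vnorm_L2 using assms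
    by (simp add: L2_set_triangle_ineq)
  finally show ?thesis .
qed

lemma vnorm_smult: "vnorm (a \<cdot>\<^sub>v v) = \<bar>a\<bar> * vnorm v"
proof -
  have "vnorm (a \<cdot>\<^sub>v v) = L2_set (\<lambda>i. \<bar>a\<bar> * \<bar>v $ i\<bar>) {0..<dim_vec v}"
    unfolding vnorm_L2 L2_set_def by (intro arg_cong[where f=sqrt] sum.cong, auto simp: power_mult_distrib)
  also have "\<dots> = \<bar>a\<bar> * L2_set (\<lambda>i. \<bar>v $ i\<bar>) {0..<dim_vec v}"
    by (simp add: L2_set_right_distrib)
  finally show ?thesis unfolding vnorm_L2 L2_set_def by simp
qed

lemma vnorm_minus: assumes "dim_vec v = dim_vec w" shows "vnorm (v - w) \<le> vnorm v + vnorm w"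
proof -
  have "v - w = v + (-1) \<cdot>\<^sub>v w" using assms by (intro eq_vecI, auto)
  thus ?thesis using vnorm_add[of v "(-1) \<cdot>\<^sub>v w"] assms by (simp add: vnorm_smult)
qed

lemma vnorm_lower3: assumes "dim_vec v = n" "dim_vec w = n" "dim_vec u = n"
  shows "vnorm v - vnorm w - vnorm u \<le> vnorm (v - w + u)"
proof -
  have "v = ((v - w + u) + w) - u" using assms by (intro eq_vecI, auto)
  hence "vnorm v \<le> vnorm ((v - w + u) + w) + vnorm u" using vnorm_minus[of "(v - w + u) + w" u] assms by simp
  also have "\<dots> \<le> vnorm (v - w + u) + vnorm w + vnorm u" using vnorm_add[of "v - w + u" w] assms by simp
  finally show ?thesis by simp
qed

lemma vnorm_zero: "vnorm (0\<^sub>v n) = 0"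
  unfolding vnorm_L2 L2_set_def by simp

lemma vnorm_eq_0: assumes "vnorm v = 0" shows "v = 0\<^sub>v (dim_vec v)"
proof -
  have "(\<Sum>i<dim_vec v. (v $ i)^2) = 0" using vnorm_sq[of v] assms by simp
  hence "\<forall>i\<in>{..<dim_vec v}. (v $ i)^2 = 0" by (subst (asm) sum_nonneg_eq_0_iff, auto)
  thus ?thesis by (intro eq_vecI, auto)
qed

lemma mat_vec_bound: assumes "x \<in> carrier_vec (dim_col M)"
  shows "vnorm (M *\<^sub>v x) \<le> sqrt (\<Sum>i<dim_row M. (L2_set (\<lambda>j. row M i $ j) {0..<dim_col M})^2) * vnorm x"
proof -
  have "\<bar>(M *\<^sub>v x) $ i\<bar> \<le> L2_set (\<lambda>j. row M i $ j) {0..<dim_col M} * vnorm x" if i: "i < dim_row M" for i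
  proof -
    have "\<bar>(M *\<^sub>v x) $ i\<bar> = \<bar>\<Sum>j\<in>{0..<dim_col M}. row M i $ j * x $ j\<bar>"
      using i assms by (auto simp: scalar_prod_def)
    also have "\<dots> \<le> (\<Sum>j\<in>{0..<dim_col M}. \<bar>row M i $ j\<bar> * \<bar>x $ j\<bar>)"
      by (rule order_trans[OF sum_abs], simp add: abs_mult)
    also have "\<dots> \<le> L2_set (\<lambda>j. row M i $ j) {0..<dim_col M} * L2_set (\<lambda>j. x $ j) {0..<dim_col M}"
      by (rule L2_set_mult_ineq)
    finally show ?thesis using assms unfolding vnorm_L2 by auto
  qed
  note hb = this
  have "((M *\<^sub>v x) $ i)^2 \<le> (L2_set (\<lambda>j. row M i $ j) {0..<dim_col M} * vnorm x)^2" if "i < dim_row M" for i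
    using power_mono[OF hb[OF that] abs_ge_zero, of 2] by simp
  hence "(\<Sum>i<dim_row M. ((M *\<^sub>v x) $ i)^2) \<le> (\<Sum>i<dim_row M. (L2_set (\<lambda>j. row M i $ j) {0..<dim_col M} * vnorm x)^2)"
    by (intro sum_mono, simp)
  also have "\<dots> = (\<Sum>i<dim_row M. (L2_set (\<lambda>j. row M i $ j) {0..<dim_col M})^2) * vnorm x ^ 2"
    by (simp add: power_mult_distrib sum_distrib_right)
  finally have "vnorm (M *\<^sub>v x) ^ 2 \<le> (sqrt (\<Sum>i<dim_row M. (L2_set (\<lambda>j. row M i $ j) {0..<dim_col M})^2) * vnorm x) ^ 2"
    unfolding vnorm_sq[of "M *\<^sub>v x"] by (simp add: power_mult_distrib sum_nonneg)
  thus ?thesis by (rule power2_le_imp_le, simp add: sum_nonneg)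
qed

lemma spec_norm_set_bdd: "bdd_above {vnorm (M *\<^sub>v x) | x. x \<in> carrier_vec (dim_col M) \<and> vnorm x \<le> 1}"
proof -
  define K where "K = sqrt (\<Sum>i<dim_row M. (L2_set (\<lambda>j. row M i $ j) {0..<dim_col M})^2)"
  have K: "K \<ge> 0" unfolding K_def by (simp add: sum_nonneg)
  show ?thesis
  proof (rule bdd_aboveI[of _ K], clarify)
    fix x :: "real vec" assume x: "x \<in> carrier_vec (dim_col M)" "vnorm x \<le> 1"
    have "vnorm (M *\<^sub>v x) \<le> K * vnorm x" using mat_vec_bound[OF x(1)] unfolding K_def .
    also have "\<dots> \<le> K" using K x(2) by (simp add: mult_left_le)
    finally show "vnorm (M *\<^sub>v x) \<le> K" .
  qed
qed

lemma spec_norm_upper: assumes x: "x \<in> carrier_vec (dim_col M)"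
  shows "vnorm (M *\<^sub>v x) \<le> spec_norm M * vnorm x"
proof (cases "vnorm x = 0")
  case True
  hence "x = 0\<^sub>v (dim_col M)" using vnorm_eq_0[of x] x by auto
  hence "M *\<^sub>v x = 0\<^sub>v (dim_row M)" by (intro eq_vecI, auto)
  thus ?thesis using True by (simp add: vnorm_zero)
next
  case False
  hence pos: "vnorm x > 0" using vnorm_nonneg[of x] by linarith
  define y where "y = (1 / vnorm x) \<cdot>\<^sub>v x"
  have y: "y \<in> carrier_vec (dim_col M)" "vnorm y \<le> 1" unfolding y_def using x pos by (auto simp: vnorm_smult)
  have My: "M *\<^sub>v y = (1 / vnorm x) \<cdot>\<^sub>v (M *\<^sub>v x)" unfolding y_def
    by (rule mult_mat_vec[OF _ x], rule carrier_matI, auto)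
  have "vnorm (M *\<^sub>v y) \<le> spec_norm M" unfolding spec_norm_def
    by (rule cSup_upper[OF _ spec_norm_set_bdd], use y in blast)
  hence "vnorm (M *\<^sub>v x) / vnorm x \<le> spec_norm M" unfolding My vnorm_smult using pos by simp
  thus ?thesis using pos by (simp add: field_simps)
qed

lemma mat_vec_zero[simp]: "M *\<^sub>v 0\<^sub>v (dim_col M) = 0\<^sub>v (dim_row M)"
  by (intro eq_vecI, auto)

lemma spec_norm_nonneg: "spec_norm M \<ge> 0"
proof -
  have "0\<^sub>v (dim_col M) \<in> carrier_vec (dim_col M)" by simp
  have "vnorm (M *\<^sub>v 0\<^sub>v (dim_col M)) \<le> spec_norm M" unfolding spec_norm_def
    by (intro cSup_upper[OF _ spec_norm_set_bdd], rule CollectI, rule exI[of _ "0\<^sub>v (dim_col M)"], simp add: vnorm_zero)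
  thus ?thesis by (simp add: vnorm_zero)
qed

lemma spec_norm_le: assumes K: "K \<ge> 0" and b: "\<And>x. x \<in> carrier_vec (dim_col M) \<Longrightarrow> vnorm (M *\<^sub>v x) \<le> K * vnorm x"
  shows "spec_norm M \<le> K"
  unfolding spec_norm_def
proof (rule cSup_least)
  show "{vnorm (M *\<^sub>v x) |x. x \<in> carrier_vec (dim_col M) \<and> vnorm x \<le> 1} \<noteq> {}"
  proof -
    have "vnorm (M *\<^sub>v 0\<^sub>v (dim_col M)) \<in> {vnorm (M *\<^sub>v x) |x. x \<in> carrier_vec (dim_col M) \<and> vnorm x \<le> 1}"
      by (rule CollectI, rule exI[of _ "0\<^sub>v (dim_col M)"], simp add: vnorm_zero)
    thus ?thesis by blast
  qed
next
  fix y assume "y \<in> {vnorm (M *\<^sub>v x) |x. x \<in> carrier_vec (dim_col M) \<and> vnorm x \<le> 1}"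
  then obtain x where x: "x \<in> carrier_vec (dim_col M)" "vnorm x \<le> 1" and y: "y = vnorm (M *\<^sub>v x)" by auto
  have "y \<le> K * vnorm x" using b[OF x(1)] y by simp
  also have "\<dots> \<le> K" using K x(2) by (simp add: mult_left_le)
  finally show "y \<le> K" .
qed

lemma spec_norm_mult: assumes A: "A \<in> carrier_mat n m" and B: "B \<in> carrier_mat m p"
  shows "spec_norm (A * B) \<le> spec_norm A * spec_norm B"
proof (rule spec_norm_le)
  show "0 \<le> spec_norm A * spec_norm B" by (simp add: spec_norm_nonneg)
next
  fix x :: "real vec" assume x: "x \<in> carrier_vec (dim_col (A * B))"
  hence x': "x \<in> carrier_vec p" using B by simp
  have "(A * B) *\<^sub>v x = A *\<^sub>v (B *\<^sub>v x)" using A B x' by simp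
  also have "vnorm \<dots> \<le> spec_norm A * vnorm (B *\<^sub>v x)" by (rule spec_norm_upper, use A B x' in simp)
  also have "\<dots> \<le> spec_norm A * (spec_norm B * vnorm x)"
    by (rule mult_left_mono[OF spec_norm_upper spec_norm_nonneg], use B x' in simp)
  finally show "vnorm ((A * B) *\<^sub>v x) \<le> spec_norm A * spec_norm B * vnorm x" by (simp add: ac_simps)
qed

lemma spec_norm_mult3: assumes A: "A \<in> carrier_mat n m" and B: "B \<in> carrier_mat m p" and C: "C \<in> carrier_mat p q"
  shows "spec_norm (A * B * C) \<le> spec_norm A * spec_norm B * spec_norm C"
proof -
  have "spec_norm (A * B * C) \<le> spec_norm (A * B) * spec_norm C" using spec_norm_mult[OF _ C, of "A * B" n] A B by simp
  also have "\<dots> \<le> spec_norm A * spec_norm B * spec_norm C"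
    by (rule mult_right_mono[OF spec_norm_mult[OF A B] spec_norm_nonneg])
  finally show ?thesis .
qed

lemma spec_norm_one: "spec_norm (1\<^sub>m n) \<le> 1"
  by (rule spec_norm_le, auto)

lemma smult_mat_vec: assumes "x \<in> carrier_vec (dim_col A)" shows "(a \<cdot>\<^sub>m A) *\<^sub>v x = a \<cdot>\<^sub>v (A *\<^sub>v x)"
  using assms by (intro eq_vecI, auto simp: scalar_prod_def sum_distrib_left ac_simps)

lemma spec_norm_smult: "spec_norm (a \<cdot>\<^sub>m A) \<le> \<bar>a\<bar> * spec_norm A"
proof (rule spec_norm_le)
  show "0 \<le> \<bar>a\<bar> * spec_norm A" by (simp add: spec_norm_nonneg)
next
  fix x :: "real vec" assume "x \<in> carrier_vec (dim_col (a \<cdot>\<^sub>m A))"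
  hence x: "x \<in> carrier_vec (dim_col A)" by simp
  show "vnorm ((a \<cdot>\<^sub>m A) *\<^sub>v x) \<le> \<bar>a\<bar> * spec_norm A * vnorm x"
    unfolding smult_mat_vec[OF x] vnorm_smult mult.assoc
    by (rule mult_left_mono[OF spec_norm_upper[OF x]], simp)
qed

lemma spec_norm_zero: "spec_norm (0\<^sub>m n m) = 0"
proof -
  have "spec_norm (0\<^sub>m n m) \<le> 0"
  proof (rule spec_norm_le, simp)
    fix x :: "real vec" assume "x \<in> carrier_vec (dim_col (0\<^sub>m n m))"
    hence "0\<^sub>m n m *\<^sub>v x = 0\<^sub>v n" by (intro eq_vecI, auto)
    thus "vnorm (0\<^sub>m n m *\<^sub>v x) \<le> 0 * vnorm x" by (simp add: vnorm_zero)
  qed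
  thus ?thesis using spec_norm_nonneg[of "0\<^sub>m n m"] by simp
qed

lemma minv_carrier: "minv M \<in> carrier_mat (dim_row M) (dim_row M)"
proof (cases "\<exists>N. N \<in> carrier_mat (dim_row M) (dim_row M) \<and> inverts_mat M N \<and> inverts_mat N M")
  case True
  then show ?thesis unfolding minv_def using someI_ex[OF True] by auto
next
  case False
  then show ?thesis unfolding minv_def by auto
qed

lemma minv_eq: assumes A: "A \<in> carrier_mat n n" and B: "B \<in> carrier_mat n n" and AB: "A * B = 1\<^sub>m n"
  shows "minv A = B"
proof -
  have BA: "B * A = 1\<^sub>m n" by (rule mat_mult_left_right_inverse[OF A B AB])
  have ex: "\<exists>N. N \<in> carrier_mat (dim_row A) (dim_row A) \<and> inverts_mat A N \<and> inverts_mat N A"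
    using A B AB BA by (intro exI[of _ B], auto simp: inverts_mat_def)
  define N where "N = (SOME N. N \<in> carrier_mat (dim_row A) (dim_row A) \<and> inverts_mat A N \<and> inverts_mat N A)"
  have "N \<in> carrier_mat (dim_row A) (dim_row A) \<and> inverts_mat A N \<and> inverts_mat N A"
    unfolding N_def by (rule someI_ex[OF ex])
  hence N: "N \<in> carrier_mat n n" "A * N = 1\<^sub>m n" "N * A = 1\<^sub>m n"
    using A unfolding inverts_mat_def by auto
  have "minv A = N" unfolding minv_def N_def using ex by simp
  also have "N = N * (A * B)" using N AB by simp
  also have "\<dots> = (N * A) * B" by (rule assoc_mult_mat[OF N(1) A B, symmetric])
  also have "\<dots> = B" using N B by simp
  finally show ?thesis .
qed

lemma inv_lower: assumes M: "M \<in> carrier_mat n n" and mu: "mu > 0"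
  and low: "\<And>x. x \<in> carrier_vec n \<Longrightarrow> mu * vnorm x \<le> vnorm (M *\<^sub>v x)"
  shows "M * minv M = 1\<^sub>m n" "minv M * M = 1\<^sub>m n" "spec_norm (minv M) \<le> 1 / mu"
proof -
  have "det M \<noteq> 0"
  proof
    assume "det M = 0"
    then obtain v where v: "v \<in> carrier_vec n" "v \<noteq> 0\<^sub>v n" "M *\<^sub>v v = 0\<^sub>v n"
      using det_0_iff_vec_prod_zero[OF M] by auto
    have "mu * vnorm v \<le> 0" using low[OF v(1)] v(3) by (simp add: vnorm_zero)
    hence "vnorm v = 0" using mu vnorm_nonneg[of v] by (simp add: mult_le_0_iff)
    hence "v = 0\<^sub>v n" using vnorm_eq_0[of v] v(1) by simp
    with v(2) show False by simp
  qed
  from det_non_zero_imp_unit[OF M this, of "()"]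
  obtain N where N: "N \<in> carrier_mat n n" "N * M = 1\<^sub>m n" "M * N = 1\<^sub>m n"
    unfolding Units_def ring_mat_simps by auto
  have eq: "minv M = N" by (rule minv_eq[OF M N(1) N(3)])
  show "M * minv M = 1\<^sub>m n" "minv M * M = 1\<^sub>m n" using eq N by auto
  show "spec_norm (minv M) \<le> 1 / mu" unfolding eq
  proof (rule spec_norm_le)
    show "0 \<le> 1 / mu" using mu by simp
  next
    fix y :: "real vec" assume "y \<in> carrier_vec (dim_col N)"
    hence y: "y \<in> carrier_vec n" using N by simp
    have "M *\<^sub>v (N *\<^sub>v y) = y" using N M y by (simp flip: assoc_mult_mat_vec)
    hence "mu * vnorm (N *\<^sub>v y) \<le> vnorm y" using low[of "N *\<^sub>v y"] N y by simp
    thus "vnorm (N *\<^sub>v y) \<le> 1 / mu * vnorm y" using mu by (simp add: field_simps)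
  qed
qed

lemma sigma_min_props: assumes W: "W \<in> carrier_mat n n" and n: "n \<ge> 1"
  shows "sigma_min W \<ge> 0" "\<And>x. x \<in> carrier_vec n \<Longrightarrow> sigma_min W * vnorm x \<le> vnorm (W *\<^sub>v x)"
    "sigma_min W * spec_norm (minv W) \<le> 1"
proof -
  let ?S = "{vnorm (W *\<^sub>v x) | x. x \<in> carrier_vec (dim_col W) \<and> vnorm x = 1}"
  have uv: "unit_vec n 0 \<in> carrier_vec n" "vnorm (unit_vec n 0) = 1"
    using n by (auto simp: vnorm_def)
  have ne: "?S \<noteq> {}" using uv W by blast
  have bdd: "bdd_below ?S" by (rule bdd_belowI[of _ 0], auto)
  show nn: "sigma_min W \<ge> 0" unfolding sigma_min_def by (rule cInf_greatest[OF ne], auto)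
  show low: "sigma_min W * vnorm x \<le> vnorm (W *\<^sub>v x)" if x: "x \<in> carrier_vec n" for x
  proof (cases "vnorm x = 0")
    case True thus ?thesis by simp
  next
    case False
    hence pos: "vnorm x > 0" using vnorm_nonneg[of x] by linarith
    define y where "y = (1 / vnorm x) \<cdot>\<^sub>v x"
    have y: "y \<in> carrier_vec (dim_col W)" "vnorm y = 1" unfolding y_def using x pos W by (auto simp: vnorm_smult)
    have Wy: "W *\<^sub>v y = (1 / vnorm x) \<cdot>\<^sub>v (W *\<^sub>v x)" unfolding y_def
      by (rule mult_mat_vec[OF W x])
    have "sigma_min W \<le> vnorm (W *\<^sub>v y)" unfolding sigma_min_def
      by (rule cInf_lower[OF _ bdd], use y in blast)
    hence "sigma_min W \<le> vnorm (W *\<^sub>v x) / vnorm x" unfolding Wy vnorm_smult using pos by simp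
    thus ?thesis using pos by (simp add: field_simps)
  qed
  show "sigma_min W * spec_norm (minv W) \<le> 1"
  proof (cases "\<exists>N. N \<in> carrier_mat (dim_row W) (dim_row W) \<and> inverts_mat W N \<and> inverts_mat N W")
    case False
    hence "minv W = 0\<^sub>m (dim_row W) (dim_row W)" unfolding minv_def by (rule if_not_P)
    hence "minv W = 0\<^sub>m n n" using W by simp
    thus ?thesis by (simp add: spec_norm_zero)
  next
    case True
    then obtain N where N: "N \<in> carrier_mat n n" "W * N = 1\<^sub>m n" using W unfolding inverts_mat_def by auto
    have eq: "minv W = N" by (rule minv_eq[OF W N])
    show ?thesis
    proof (cases "sigma_min W = 0")
      case True thus ?thesis by simp
    next
      case False
      hence sp: "sigma_min W > 0" using nn by simp
      have "spec_norm N \<le> 1 / sigma_min W"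
      proof (rule spec_norm_le)
        show "0 \<le> 1 / sigma_min W" using sp by simp
      next
        fix y :: "real vec" assume "y \<in> carrier_vec (dim_col N)"
        hence y: "y \<in> carrier_vec n" using N by simp
        have "W *\<^sub>v (N *\<^sub>v y) = y" using N W y by (simp flip: assoc_mult_mat_vec)
        hence "sigma_min W * vnorm (N *\<^sub>v y) \<le> vnorm y" using low[of "N *\<^sub>v y"] N y by simp
        thus "vnorm (N *\<^sub>v y) \<le> 1 / sigma_min W * vnorm y" using sp by (simp add: field_simps)
      qed
      thus ?thesis unfolding eq using sp by (simp add: field_simps)
    qed
  qed
qed




definition diagm :: "nat \<Rightarrow> (nat \<Rightarrow> real) \<Rightarrow> real mat" where
  "diagm n f = mat n n (\<lambda>(i,j). if i = j then f i else 0)"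

lemma diagm_carrier[simp]: "diagm n f \<in> carrier_mat n n" "dim_row (diagm n f) = n" "dim_col (diagm n f) = n"
  unfolding diagm_def by auto

lemma diagm_index[simp]: "i < n \<Longrightarrow> j < n \<Longrightarrow> diagm n f $$ (i,j) = (if i = j then f i else 0)"
  unfolding diagm_def by auto

lemma diagm_mult: "diagm n f * diagm n g = diagm n (\<lambda>i. f i * g i)"
proof (rule eq_matI)
  fix i j assume ij: "i < dim_row (diagm n (\<lambda>i. f i * g i))" "j < dim_col (diagm n (\<lambda>i. f i * g i))"
  hence ij: "i < n" "j < n" by auto
  have "(diagm n f * diagm n g) $$ (i,j) = (\<Sum>x\<in>{0..<n}. (if i = x then f i else 0) * (if x = j then g x else 0))"
    using ij by (auto simp: scalar_prod_def)
  also have "\<dots> = (\<Sum>x\<in>{0..<n}. if x = i then (if i = j then f i * g i else 0) else 0)"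
    by (rule sum.cong, auto)
  also have "\<dots> = (if i = j then f i * g i else 0)" using ij by simp
  finally show "(diagm n f * diagm n g) $$ (i,j) = diagm n (\<lambda>i. f i * g i) $$ (i,j)" using ij by simp
qed auto

lemma diagm_smult: "a \<cdot>\<^sub>m diagm n f = diagm n (\<lambda>i. a * f i)"
  by (rule eq_matI, auto)

lemma diagm_minus: "diagm n f - diagm n g = diagm n (\<lambda>i. f i - g i)"
  by (rule eq_matI, auto)

lemma diagm_one: "1\<^sub>m n = diagm n (\<lambda>i. 1)"
  by (rule eq_matI, auto)

lemma diagm_mat_vec: "x \<in> carrier_vec n \<Longrightarrow> i < n \<Longrightarrow> (diagm n f *\<^sub>v x) $ i = f i * x $ i"
proof -
  assume x: "x \<in> carrier_vec n" and i: "i < n"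
  have "(diagm n f *\<^sub>v x) $ i = (\<Sum>j\<in>{0..<n}. (if i = j then f i else 0) * x $ j)"
    using x i by (auto simp: scalar_prod_def)
  also have "\<dots> = (\<Sum>j\<in>{0..<n}. if j = i then f i * x $ i else 0)" by (rule sum.cong, auto)
  also have "\<dots> = f i * x $ i" using i by simp
  finally show ?thesis .
qed

lemma spec_norm_diagm: assumes b: "b \<ge> 0" and f: "\<And>i. i < n \<Longrightarrow> \<bar>f i\<bar> \<le> b"
  shows "spec_norm (diagm n f) \<le> b"
proof (rule spec_norm_le[OF b])
  fix x :: "real vec" assume "x \<in> carrier_vec (dim_col (diagm n f))"
  hence x: "x \<in> carrier_vec n" by simp
  have "((diagm n f *\<^sub>v x) $ i)^2 \<le> b^2 * (x $ i)^2" if i: "i < n" for i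
  proof -
    have "((diagm n f *\<^sub>v x) $ i)^2 = (f i)^2 * (x $ i)^2" using diagm_mat_vec[OF x i] by (simp add: power_mult_distrib)
    also have "\<dots> \<le> b^2 * (x $ i)^2"
      by (rule mult_right_mono, use power_mono[OF f[OF i] abs_ge_zero, of 2] in simp_all)
    finally show ?thesis .
  qed
  hence "(\<Sum>i<n. ((diagm n f *\<^sub>v x) $ i)^2) \<le> (\<Sum>i<n. b^2 * (x $ i)^2)" by (intro sum_mono, simp)
  moreover have "vnorm x ^ 2 = (\<Sum>i<n. (x $ i)^2)" using vnorm_sq[of x] x by simp
  moreover have "vnorm (diagm n f *\<^sub>v x) ^ 2 = (\<Sum>i<n. ((diagm n f *\<^sub>v x) $ i)^2)" using vnorm_sq[of "diagm n f *\<^sub>v x"] by simp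
  ultimately have "vnorm (diagm n f *\<^sub>v x) ^ 2 \<le> (b * vnorm x)^2"
    by (simp add: power_mult_distrib sum_distrib_left)
  thus "vnorm (diagm n f *\<^sub>v x) \<le> b * vnorm x" by (rule power2_le_imp_le, use b in simp)
qed

fun pp :: "real \<Rightarrow> real \<Rightarrow> nat \<Rightarrow> real" where
  "pp b x 0 = 1"
| "pp b x (Suc 0) = x / 2"
| "pp b x (Suc (Suc t)) = x * pp b x (Suc t) - b * pp b x t"

fun qq :: "real \<Rightarrow> real \<Rightarrow> nat \<Rightarrow> real" where
  "qq b x 0 = 1"
| "qq b x (Suc 0) = x"
| "qq b x (Suc (Suc t)) = x * qq b x (Suc t) - b * qq b x t"

lemma pmat_diagm: "pmat b (diagm n f) t = diagm n (\<lambda>i. pp b (f i) t)"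
proof (induction t rule: pp.induct[where ?P = "\<lambda>_ _ t. pmat b (diagm n f) t = diagm n (\<lambda>i. pp b (f i) t)"])
  case (1 b x) thus ?case by (simp add: diagm_one)
next
  case (2 b x) thus ?case by (simp add: diagm_smult)
next
  case (3 b' x t)
  thus ?case by (simp add: diagm_mult diagm_smult diagm_minus)
qed

lemma qmat_diagm: "qmat b (diagm n f) t = diagm n (\<lambda>i. qq b (f i) t)"
proof (induction t rule: qq.induct[where ?P = "\<lambda>_ _ t. qmat b (diagm n f) t = diagm n (\<lambda>i. qq b (f i) t)"])
  case (1 b x) thus ?case by (simp add: diagm_one)
next
  case (2 b x) thus ?case by (rule eq_matI, auto)
next
  case (3 b' x t)
  thus ?case by (simp add: diagm_mult diagm_smult diagm_minus)
qed

lemma pp_inv: "pp b x (Suc t) ^ 2 - x * pp b x (Suc t) * pp b x t + b * pp b x t ^ 2 = b ^ t * (b - x^2/4)"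
proof (induction t)
  case 0 thus ?case by (simp add: power2_eq_square field_simps)
next
  case (Suc t)
  have "pp b x (Suc (Suc t)) ^ 2 - x * pp b x (Suc (Suc t)) * pp b x (Suc t) + b * pp b x (Suc t) ^ 2
     = b * (pp b x (Suc t) ^ 2 - x * pp b x (Suc t) * pp b x t + b * pp b x t ^ 2)"
    by (simp add: power2_eq_square algebra_simps)
  thus ?case using Suc by simp
qed

lemma qq_inv: "qq b x (Suc t) ^ 2 - x * qq b x (Suc t) * qq b x t + b * qq b x t ^ 2 = b ^ (Suc t)"
proof (induction t)
  case 0 thus ?case by (simp add: power2_eq_square field_simps)
next
  case (Suc t)
  have "qq b x (Suc (Suc t)) ^ 2 - x * qq b x (Suc (Suc t)) * qq b x (Suc t) + b * qq b x (Suc t) ^ 2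
     = b * (qq b x (Suc t) ^ 2 - x * qq b x (Suc t) * qq b x t + b * qq b x t ^ 2)"
    by (simp add: power2_eq_square algebra_simps)
  thus ?case using Suc by simp
qed

lemma pp_edge: "pp (s^2) (2*s) t = s ^ t"
  by (induction "s^2" "2*s" t rule: pp.induct, auto simp: power2_eq_square algebra_simps)

lemma pp_bound: assumes s: "s > 0" and x: "0 \<le> x" "x \<le> 2 * s"
  shows "\<bar>pp (s^2) x t\<bar> \<le> s ^ t"
proof (cases "x = 2 * s")
  case True thus ?thesis using s by (simp add: pp_edge)
next
  case False
  hence xl: "x < 2 * s" using x by simp
  have "x^2 < (2*s)^2" by (rule power_strict_mono[OF xl x(1)], simp)
  hence d: "4 * s^2 - x^2 > 0" by (simp add: power_mult_distrib)
  show ?thesis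
  proof (cases t)
    case 0 thus ?thesis by simp
  next
    case (Suc t')
    define a where "a = pp (s^2) x (Suc t')"
    define b where "b = pp (s^2) x t'"
    have I: "a^2 - x * a * b + s^2 * b^2 = (s^2)^t' * (s^2 - x^2/4)" unfolding a_def b_def by (rule pp_inv)
    have id: "(2*s^2*b - x*a)^2 + (4*s^2 - x^2)*a^2 = 4*s^2*(a^2 - x*a*b + s^2*b^2)"
      by (simp add: power2_eq_square algebra_simps)
    have "4*s^2*((s^2)^t' * (s^2 - x^2/4)) = (4*s^2 - x^2) * (s ^ Suc t')^2"
      by (simp add: power2_eq_square power_mult_distrib algebra_simps flip: power_mult)
    hence "(2*s^2*b - x*a)^2 + (4*s^2 - x^2)*a^2 = (4*s^2 - x^2) * (s ^ Suc t')^2" using id I by simp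
    hence "(4*s^2 - x^2)*a^2 \<le> (4*s^2 - x^2) * (s ^ Suc t')^2"
      using zero_le_power2[of "2*s^2*b - x*a"] by linarith
    hence "a^2 \<le> (s ^ Suc t')^2" using d by simp
    hence "\<bar>a\<bar> \<le> \<bar>s ^ Suc t'\<bar>" by (simp add: abs_le_square_iff)
    thus ?thesis using Suc s unfolding a_def by simp
  qed
qed

lemma qq_bound: assumes s: "s > 0" and x: "0 \<le> x" "x \<le> 2 * s"
  shows "\<bar>qq (s^2) x t\<bar> \<le> real (t + 1) * s ^ t"
proof (induction t)
  case 0 thus ?case by simp
next
  case (Suc t)
  define a where "a = qq (s^2) x (Suc t)"
  define b where "b = qq (s^2) x t"
  have "x^2 \<le> (2*s)^2" by (rule power_mono[OF x(2) x(1)])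
  hence d: "4 * s^2 - x^2 \<ge> 0" by (simp add: power_mult_distrib)
  have I: "a^2 - x * a * b + s^2 * b^2 = (s^2)^Suc t" unfolding a_def b_def by (rule qq_inv)
  have id: "(2*a - x*b)^2 + (4*s^2 - x^2)*b^2 = 4*(a^2 - x*a*b + s^2*b^2)"
    by (simp add: power2_eq_square algebra_simps)
  have e: "4*(s^2)^Suc t = (2 * s ^ Suc t)^2" by (simp add: power_mult_distrib flip: power_mult) (simp add: mult.commute)
  have "(4*s^2 - x^2)*b^2 \<ge> 0" using d by simp
  have "(2*a - x*b)^2 + (4*s^2 - x^2)*b^2 = (2 * s ^ Suc t)^2" using id I e by simp
  hence "(2*a - x*b)^2 \<le> (2 * s ^ Suc t)^2" using \<open>(4*s^2 - x^2)*b^2 \<ge> 0\<close> by linarith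
  hence "\<bar>2*a - x*b\<bar> \<le> \<bar>2 * s ^ Suc t\<bar>" by (simp only: abs_le_square_iff)
  hence h: "\<bar>2*a - x*b\<bar> \<le> 2 * s ^ Suc t" using s by simp
  have "2 * \<bar>a\<bar> \<le> \<bar>2*a - x*b\<bar> + \<bar>x*b\<bar>" by linarith
  also have "\<bar>x*b\<bar> = x * \<bar>b\<bar>" using x by (simp add: abs_mult)
  also have "x * \<bar>b\<bar> \<le> 2 * s * (real (t + 1) * s ^ t)" by (rule mult_mono, use x Suc s in \<open>auto simp: b_def\<close>)
  finally have "2 * \<bar>a\<bar> \<le> 2 * s ^ Suc t + 2 * s * (real (t + 1) * s ^ t)" using h by linarith
  thus ?case unfolding a_def by (simp add: algebra_simps)
qed


lemma prod_lower:
  fixes S :: "nat \<Rightarrow> real"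
  assumes S0: "S 0 = 1" and S1: "S 1 \<ge> r1"
    and rec: "\<And>n. S (n + 2) = a * S (n + 1) - bt * S n"
    and xm: "xm \<ge> 0" and xp: "xp \<ge> 0" and sum: "xm + xp = a" and prd: "xm * xp = bt"
    and hrho: "rho^2 - a * rho + bt \<le> 0" and rho0: "rho \<ge> 0" and hy: "31 * r1 - 15 * rho \<ge> 16 * xm"
  shows "S n \<ge> 15/31 * rho ^ n"
proof -
  define Q where "Q n = S n - 15/31 * rho ^ n" for n
  define D where "D n = Q (n + 1) - xm * Q n" for n
  have D0: "D 0 \<ge> 0" unfolding D_def Q_def using S0 S1 hy by simp
  have Dstep: "D (Suc n) \<ge> xp * D n" for n
  proof -
    have "D (Suc n) - xp * D n = Q (n + 2) - a * Q (n + 1) + bt * Q n"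
      unfolding D_def using sum[symmetric] prd[symmetric] by (simp add: algebra_simps)
    also have "\<dots> = - (15/31) * rho ^ n * (rho^2 - a * rho + bt)"
      unfolding Q_def rec by (simp add: field_simps power2_eq_square)
    also have "\<dots> \<ge> 0"
    proof -
      have "rho ^ n * (rho^2 - a * rho + bt) \<le> 0" by (rule mult_nonneg_nonpos[OF zero_le_power[OF rho0] hrho])
      thus ?thesis by simp
    qed
    finally show ?thesis by simp
  qed
  have Dn: "D n \<ge> 0" for n
  proof (induction n)
    case 0 show ?case by (rule D0)
  next
    case (Suc n) show ?case using Dstep[of n] mult_nonneg_nonneg[OF xp Suc] by linarith
  qed
  have "Q n \<ge> 0" for n
  proof (induction n)
    case 0 show ?case unfolding Q_def using S0 by simp
  next
    case (Suc n)
    have "Q (Suc n) = D n + xm * Q n" unfolding D_def by simp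
    thus ?case using Dn[of n] mult_nonneg_nonneg[OF xm Suc] by linarith
  qed
  from this[of n] show ?thesis unfolding Q_def by linarith
qed

fun rseq :: "real \<Rightarrow> real \<Rightarrow> real \<Rightarrow> nat \<Rightarrow> real" where
  "rseq a bt r1 0 = r1"
| "rseq a bt r1 (Suc n) = a - bt / rseq a bt r1 n"

lemma rseq_ge: assumes r1: "r1 > 0" and bt: "bt \<ge> 0" and q: "r1^2 - a * r1 + bt \<le> 0"
  shows "rseq a bt r1 n \<ge> r1"
proof (induction n)
  case 0 thus ?case by simp
next
  case (Suc n)
  have "bt / rseq a bt r1 n \<le> bt / r1" by (rule divide_left_mono[OF Suc bt], use r1 Suc in auto)
  moreover have "a - bt / r1 \<ge> r1" using q r1 by (simp add: field_simps power2_eq_square)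
  ultimately show ?case by simp
qed

lemma rseq_prod_lower:
  assumes r1: "r1 > 0" and bt: "bt \<ge> 0" and q: "r1^2 - a * r1 + bt \<le> 0"
    and xm: "xm \<ge> 0" and xp: "xp \<ge> 0" and sum: "xm + xp = a" and prd: "xm * xp = bt"
    and hrho: "rho^2 - a * rho + bt \<le> 0" and rho0: "rho \<ge> 0" and hy: "31 * r1 - 15 * rho \<ge> 16 * xm"
  shows "(\<Prod>i\<in>{m..<m+n}. rseq a bt r1 i) \<ge> 15/31 * rho ^ n"
proof -
  define S where "S n = (\<Prod>i\<in>{m..<m+n}. rseq a bt r1 i)" for n
  have Ssuc: "S (Suc n) = S n * rseq a bt r1 (m + n)" for n unfolding S_def by simp
  have pos: "rseq a bt r1 i > 0" for i using rseq_ge[OF r1 bt q, of i] r1 by simp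
  show ?thesis unfolding S_def[symmetric]
  proof (rule prod_lower[OF _ _ _ xm xp sum prd hrho rho0 hy])
    show "S 0 = 1" unfolding S_def by simp
    show "S 1 \<ge> r1" unfolding S_def using rseq_ge[OF r1 bt q, of m] by simp
    fix n
    have "S (n + 2) = S n * rseq a bt r1 (m + n) * rseq a bt r1 (Suc (m + n))"
      using Ssuc[of "Suc n"] Ssuc[of n] by (simp add: algebra_simps)
    also have "\<dots> = a * (S n * rseq a bt r1 (m + n)) - bt * S n"
      using pos[of "m+n"] by (simp add: field_simps)
    also have "\<dots> = a * S (n + 1) - bt * S n" using Ssuc[of n] by simp
    finally show "S (n + 2) = a * S (n + 1) - bt * S n" .
  qed
qed




lemma consts_ok:
  fixes lam s :: real
  assumes s: "s > 0" and lam: "lam > 2 * s"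
  defines "a \<equiv> lam - (lam - 2 * s) / 32" and "r1 \<equiv> lam / 2 - (lam - 2 * s) / 32"
    and "p \<equiv> (lam + sqrt (lam^2 - 4 * s^2)) / 2"
    and "rho \<equiv> (1 - 1/32) * ((lam + sqrt (lam^2 - 4 * s^2)) / 2) + 1/32 * s"
  shows "r1 > 0" "r1^2 - a * r1 + s^2 \<le> 0" "rho^2 - a * rho + s^2 \<le> 0" "rho > 0"
    "\<exists>xm xp. xm \<ge> 0 \<and> xp \<ge> 0 \<and> xm + xp = a \<and> xm * xp = s^2 \<and> 31 * r1 - 15 * rho \<ge> 16 * xm"
proof -
  define D where "D = sqrt (lam^2 - 4 * s^2)"
  have l2: "lam^2 > (2*s)^2" by (rule power_strict_mono[OF lam], use s in auto)
  have D: "D \<ge> 0" "D^2 = lam^2 - 4 * s^2" unfolding D_def using l2 by (auto simp: power_mult_distrib)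
  have pD: "p = (lam + D) / 2" unfolding p_def D_def ..
  have rho_p: "rho = (1 - 1/32) * p + 1/32 * s" unfolding rho_def p_def ..
  have pq: "p^2 - lam * p + s^2 = 0" unfolding pD using D(2) by (simp add: power2_eq_square field_simps)
  have ps: "p > s" unfolding pD using D lam by simp
  have pp: "p > 0" using ps s by simp
  have lamp: "lam = (p^2 + s^2) / p" using pq pp by (simp add: field_simps power2_eq_square)
  show "r1 > 0" unfolding r1_def using lam s by simp
  show "r1^2 - a * r1 + s^2 \<le> 0"
  proof -
    have "r1^2 - a * r1 + s^2 = s^2 - r1 * lam / 2" unfolding r1_def a_def by (simp add: power2_eq_square field_simps)
    also have "r1 * lam / 2 = (15 * lam^2 + 2 * s * lam) / 64" unfolding r1_def by (simp add: power2_eq_square field_simps)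
    also have "(15 * lam^2 + 2 * s * lam) / 64 \<ge> s^2"
    proof -
      have "lam^2 > 4 * s^2" using l2 by (simp add: power_mult_distrib)
      moreover have "s * lam > s * (2 * s)" by (rule mult_strict_left_mono[OF lam s])
      ultimately show ?thesis by (simp add: power2_eq_square)
    qed
    finally show ?thesis by simp
  qed
  show "rho > 0" unfolding rho_p using pp s by simp
  show "rho^2 - a * rho + s^2 \<le> 0"
  proof -
    have "rho^2 - a * rho + s^2 = - 31 * s * (p - s)^2 / (1024 * p)"
      unfolding rho_p a_def lamp using pp by (simp add: field_simps power2_eq_square)
    also have "\<dots> \<le> 0" using pp s by (simp add: divide_nonpos_pos)
    finally show ?thesis .
  qed
  have a2: "a > 2 * s" unfolding a_def using lam by (auto simp: field_simps)
  have "a^2 > (2*s)^2" by (rule power_strict_mono[OF a2], use s in auto)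
  hence a2': "a^2 - 4 * s^2 > 0" by (simp add: power_mult_distrib)
  define E where "E = sqrt (a^2 - 4 * s^2)"
  have E: "E \<ge> 0" "E^2 = a^2 - 4 * s^2" unfolding E_def using a2' by auto
  have Ea: "E \<le> a" proof -
    have "E^2 \<le> a^2" using E s by simp
    thus ?thesis by (rule power2_le_imp_le, use a2 s in simp)
  qed
  define xm where "xm = (a - E) / 2"
  define xp where "xp = (a + E) / 2"
  have R: "E \<ge> a - (31 * r1 - 15 * rho) / 8"
  proof (cases "a - (31 * r1 - 15 * rho) / 8 \<le> 0")
    case True thus ?thesis using E by (simp add: field_simps)
  next
    case False
    have id: "a^2 - 4 * s^2 - (a - (31 * r1 - 15 * rho) / 8)^2 = s * (p - s)^2 * (93248 * p + 57660 * s) / (512^2 * p^2)"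
      unfolding rho_p a_def r1_def lamp using pp by (simp add: field_simps power2_eq_square)
    have "s * (p - s)^2 * (93248 * p + 57660 * s) / (512^2 * p^2) \<ge> 0" using pp s by simp
    hence "(a - (31 * r1 - 15 * rho) / 8)^2 \<le> E^2" using id E by simp
    thus ?thesis by (rule power2_le_imp_le, use E(1) in simp)
  qed
  show "\<exists>xm xp. xm \<ge> 0 \<and> xp \<ge> 0 \<and> xm + xp = a \<and> xm * xp = s^2 \<and> 31 * r1 - 15 * rho \<ge> 16 * xm"
  proof (intro exI conjI)
    show "xm \<ge> 0" unfolding xm_def using Ea by simp
    show "xp \<ge> 0" unfolding xp_def using E a2 s by simp
    show "xm + xp = a" unfolding xm_def xp_def by (simp add: field_simps)
    show "xm * xp = s^2" unfolding xm_def xp_def using E(2) by (simp add: field_simps power2_eq_square)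
    show "31 * r1 - 15 * rho \<ge> 16 * xm" unfolding xm_def using R by (simp add: field_simps)
  qed
qed


lemma vnorm_sq_sp: "vnorm v ^ 2 = v \<bullet> v"
  unfolding vnorm_def by (simp add: scalar_prod_def sum_nonneg)

lemma orth_iso: assumes X: "X \<in> carrier_mat d k" and XX: "X\<^sup>T * X = 1\<^sub>m k" and x: "x \<in> carrier_vec k"
  shows "vnorm (X *\<^sub>v x) = vnorm x"
proof -
  have "(X\<^sup>T *\<^sub>v (X *\<^sub>v x)) \<bullet> x = (X *\<^sub>v x) \<bullet> (X *\<^sub>v x)"
    by (rule transpose_vec_mult_scalar[OF X x], use X x in simp)
  moreover have "X\<^sup>T *\<^sub>v (X *\<^sub>v x) = x"
    using X x XX by (simp flip: assoc_mult_mat_vec[of "X\<^sup>T" k d X k x])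
  ultimately have "vnorm (X *\<^sub>v x) ^ 2 = vnorm x ^ 2" unfolding vnorm_sq_sp by simp
  thus ?thesis by (simp add: power2_eq_iff_nonneg)
qed

lemma Ufirst_contr: assumes U: "U \<in> carrier_mat d d" and UU: "U\<^sup>T * U = 1\<^sub>m d" and kd: "k \<le> d"
  and y: "y \<in> carrier_vec d"
  shows "vnorm ((Ufirst U k)\<^sup>T *\<^sub>v y) \<le> vnorm y"
proof -
  have UU': "U * U\<^sup>T = 1\<^sub>m d" by (rule mat_mult_left_right_inverse[OF _ U UU], use U in simp)
  have iso: "vnorm (U\<^sup>T *\<^sub>v y) = vnorm y"
    by (rule orth_iso[of _ d d], use U UU' y in auto)
  have eqj: "((Ufirst U k)\<^sup>T *\<^sub>v y) $ j = (U\<^sup>T *\<^sub>v y) $ j" if j: "j < k" for j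
    using j kd U y by (auto simp: Ufirst_def scalar_prod_def)
  have "vnorm ((Ufirst U k)\<^sup>T *\<^sub>v y) ^ 2 = (\<Sum>j<k. ((U\<^sup>T *\<^sub>v y) $ j)^2)"
    unfolding vnorm_sq using eqj U by (simp add: Ufirst_def)
  also have "\<dots> \<le> (\<Sum>j<d. ((U\<^sup>T *\<^sub>v y) $ j)^2)"
    by (rule sum_mono2, use kd in auto)
  also have "\<dots> = vnorm (U\<^sup>T *\<^sub>v y) ^ 2" unfolding vnorm_sq using U by simp
  finally have "vnorm ((Ufirst U k)\<^sup>T *\<^sub>v y) ^ 2 \<le> vnorm y ^ 2" using iso by simp
  thus ?thesis by (rule power2_le_imp_le, simp)
qed

lemma sigma_le1: assumes U: "U \<in> carrier_mat d d" and UU: "U\<^sup>T * U = 1\<^sub>m d" and kd: "k \<le> d" and k: "k \<ge> 1"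
  and X: "X \<in> carrier_mat d k" and XX: "X\<^sup>T * X = 1\<^sub>m k"
  shows "sigma_min ((Ufirst U k)\<^sup>T * X) \<le> 1"
proof -
  let ?W = "(Ufirst U k)\<^sup>T * X"
  have Uk: "Ufirst U k \<in> carrier_mat d k" using U by (simp add: Ufirst_def)
  hence UkT: "(Ufirst U k)\<^sup>T \<in> carrier_mat k d" by simp
  have W: "?W \<in> carrier_mat k k" using mult_carrier_mat[OF UkT X] .
  have e: "unit_vec k 0 \<in> carrier_vec k" "vnorm (unit_vec k 0) = 1" using k by (auto simp: vnorm_def)
  have "sigma_min ?W * vnorm (unit_vec k 0) \<le> vnorm (?W *\<^sub>v unit_vec k 0)"
    by (rule sigma_min_props(2)[OF W k e(1)])
  also have "?W *\<^sub>v unit_vec k 0 = (Ufirst U k)\<^sup>T *\<^sub>v (X *\<^sub>v unit_vec k 0)"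
    by (rule assoc_mult_mat_vec[of _ k d], use X e U in \<open>auto simp: Ufirst_def\<close>)
  also have "vnorm \<dots> \<le> vnorm (X *\<^sub>v unit_vec k 0)"
    by (rule Ufirst_contr[OF U UU kd], use X e in simp)
  also have "\<dots> = 1" using orth_iso[OF X XX e(1)] e by simp
  finally show ?thesis using e by simp
qed


lemma E_bound:
  assumes Li: "minv L \<in> carrier_mat k k" "spec_norm (minv L) \<le> 1 / lamk" and lamk: "lamk > 0" and c0: "c0 \<ge> 0"
    and Uk: "Uk \<in> carrier_mat d k" and Xi: "Xi \<in> carrier_mat d k" and X: "X \<in> carrier_mat d k" and k: "k \<ge> 1"
    and sig: "sigma_min (Uk\<^sup>T * X) \<le> 1"
    and P: "spec_norm (Uk\<^sup>T * Xi) \<le> c0 * cos_theta Uk X"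
  shows "spec_norm (Emat L Uk Xi X) \<le> c0 / lamk"
proof -
  let ?W = "Uk\<^sup>T * X" and ?P = "Uk\<^sup>T * Xi"
  have W: "?W \<in> carrier_mat k k" using Uk X by simp
  have Pc: "?P \<in> carrier_mat k k" using Uk Xi by simp
  have Wi: "minv ?W \<in> carrier_mat k k" using minv_carrier[of ?W] W Uk by simp
  have s0: "sigma_min ?W \<ge> 0" and s1: "sigma_min ?W * spec_norm (minv ?W) \<le> 1"
    using sigma_min_props[OF W k] by auto
  have cos: "cos_theta Uk X = sigma_min ?W" unfolding cos_theta_def using s0 sig by (simp add: cos_arccos)
  have "spec_norm (Emat L Uk Xi X) \<le> spec_norm (minv L) * spec_norm ?P * spec_norm (minv ?W)"
    unfolding Emat_def by (rule spec_norm_mult3[OF Li(1) Pc Wi])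
  also have "\<dots> \<le> (1 / lamk) * (c0 * sigma_min ?W) * spec_norm (minv ?W)"
    by (intro mult_right_mono mult_mono, use Li P cos s0 c0 lamk in \<open>auto simp: spec_norm_nonneg\<close>)
  also have "\<dots> = (c0 / lamk) * (sigma_min ?W * spec_norm (minv ?W))" by simp
  also have "\<dots> \<le> c0 / lamk" by (rule mult_left_le[OF s1], use c0 lamk in simp)
  finally show ?thesis .
qed


lemma vnorm_lower2: assumes "dim_vec u = dim_vec v" shows "vnorm u - vnorm v \<le> vnorm (u + v)"
proof -
  have "u = (u + v) - v" using assms by (intro eq_vecI, auto)
  hence "vnorm u \<le> vnorm (u + v) + vnorm v" using vnorm_minus[of "u + v" v] assms by simp
  thus ?thesis by simp
qed

lemma inv_lower_all: assumes M: "M \<in> carrier_mat n n" and mu: "mu > 0"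
  and low: "\<And>x. x \<in> carrier_vec n \<Longrightarrow> mu * vnorm x \<le> vnorm (M *\<^sub>v x)"
  shows "minv M \<in> carrier_mat n n" "minv (minv M) = M" "spec_norm (minv M) \<le> 1 / mu"
proof -
  show Mi: "minv M \<in> carrier_mat n n" using minv_carrier[of M] M by simp
  show "minv (minv M) = M" by (rule minv_eq[OF Mi M inv_lower(2)[OF M mu low]])
  show "spec_norm (minv M) \<le> 1 / mu" by (rule inv_lower(3)[OF M mu low])
qed

lemma G_props:
  fixes L :: "real mat" and E :: "nat \<Rightarrow> real mat"
  assumes L: "L \<in> carrier_mat k k" and Li: "minv L \<in> carrier_mat k k" "spec_norm (minv L) \<le> 1 / lamk"
    and lamk: "lamk > 0" and bt: "bt \<ge> 0"
    and E: "\<And>n. E n \<in> carrier_mat k k" and Eb: "\<And>n. spec_norm (E n) \<le> dl / lamk"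
    and r1: "r1 = lamk / 2 - dl" and a: "a = lamk - dl"
    and rpos: "\<And>n. rseq a bt r1 n > 0"
  shows "Gmat bt L E n \<in> carrier_mat k k \<and> spec_norm (Gmat bt L E n) \<le> lamk / rseq a bt r1 n
     \<and> minv (Gmat bt L E n) * Gmat bt L E n = 1\<^sub>m k \<and> minv (Gmat bt L E n) = (if n = 0 then (1/2) \<cdot>\<^sub>m 1\<^sub>m k + E 0
          else 1\<^sub>m k - bt \<cdot>\<^sub>m (minv L * Gmat bt L E (n - 1) * minv L) + E n)"
proof (induction n)
  case 0
  let ?M = "(1/2) \<cdot>\<^sub>m 1\<^sub>m k + E 0"
  have M: "?M \<in> carrier_mat k k" using E[of 0] by simp
  have mu: "r1 / lamk > 0" using rpos[of 0] lamk by simp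
  have low: "r1 / lamk * vnorm x \<le> vnorm (?M *\<^sub>v x)" if x: "x \<in> carrier_vec k" for x
  proof -
    have eq: "?M *\<^sub>v x = (1/2) \<cdot>\<^sub>v x + E 0 *\<^sub>v x"
      using x E[of 0] by (simp add: add_mult_distrib_mat_vec[of _ k k] smult_mat_vec)
    have "vnorm ((1/2) \<cdot>\<^sub>v x) - vnorm (E 0 *\<^sub>v x) \<le> vnorm (?M *\<^sub>v x)"
      unfolding eq by (rule vnorm_lower2, use x E[of 0] in simp)
    moreover have "vnorm (E 0 *\<^sub>v x) \<le> dl / lamk * vnorm x"
      using spec_norm_upper[of x "E 0"] x E[of 0] Eb[of 0] mult_right_mono[OF Eb[of 0] vnorm_nonneg[of x]] by simp
    moreover have "vnorm ((1/2) \<cdot>\<^sub>v x) = 1/2 * vnorm x" by (simp add: vnorm_smult)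
    moreover have "(1/2 - dl / lamk) * vnorm x = 1/2 * vnorm x - dl / lamk * vnorm x" by (simp add: algebra_simps)
    ultimately have "(1/2 - dl / lamk) * vnorm x \<le> vnorm (?M *\<^sub>v x)" by linarith
    moreover have "1/2 - dl / lamk = r1 / lamk" unfolding r1 using lamk by (simp add: field_simps)
    ultimately show ?thesis by simp
  qed
  note R = inv_lower_all[OF M mu low] inv_lower[OF M mu low]
  have G0: "Gmat bt L E 0 = minv ?M" using L by simp
  show ?case unfolding G0 using R lamk rpos[of 0] by simp
next
  case (Suc n)
  let ?G = "Gmat bt L E n"
  let ?B = "minv L * ?G * minv L"
  let ?M = "1\<^sub>m k - bt \<cdot>\<^sub>m ?B + E (Suc n)"
  have G: "?G \<in> carrier_mat k k" "spec_norm ?G \<le> lamk / rseq a bt r1 n" using Suc by auto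
  have B: "?B \<in> carrier_mat k k" using G Li by simp
  have rn: "rseq a bt r1 n > 0" using rpos by simp
  have Bn: "spec_norm ?B \<le> 1 / (lamk * rseq a bt r1 n)"
  proof -
    have "spec_norm ?B \<le> spec_norm (minv L) * spec_norm ?G * spec_norm (minv L)"
      by (rule spec_norm_mult3[OF Li(1) G(1) Li(1)])
    also have "\<dots> \<le> (1 / lamk) * (lamk / rseq a bt r1 n) * (1 / lamk)"
      by (intro mult_mono, use Li G lamk rn in \<open>auto simp: spec_norm_nonneg\<close>)
    also have "\<dots> = 1 / (lamk * rseq a bt r1 n)" using lamk by simp
    finally show ?thesis .
  qed
  have M: "?M \<in> carrier_mat k k" using E[of "Suc n"] B by simp
  define mu where "mu = rseq a bt r1 (Suc n) / lamk"
  have mu: "mu > 0" unfolding mu_def using rpos[of "Suc n"] lamk by simp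
  have low: "mu * vnorm x \<le> vnorm (?M *\<^sub>v x)" if x: "x \<in> carrier_vec k" for x
  proof -
    have c1: "1\<^sub>m k - bt \<cdot>\<^sub>m ?B \<in> carrier_mat k k" by (rule carrier_matI, use B in auto)
    have c2: "bt \<cdot>\<^sub>m ?B \<in> carrier_mat k k" using B by simp
    have "?M *\<^sub>v x = (1\<^sub>m k - bt \<cdot>\<^sub>m ?B) *\<^sub>v x + E (Suc n) *\<^sub>v x"
      by (rule add_mult_distrib_mat_vec[OF c1 E x])
    also have "(1\<^sub>m k - bt \<cdot>\<^sub>m ?B) *\<^sub>v x = 1\<^sub>m k *\<^sub>v x - (bt \<cdot>\<^sub>m ?B) *\<^sub>v x"
      by (rule minus_mult_distrib_mat_vec[OF one_carrier_mat c2 x])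
    also have "(bt \<cdot>\<^sub>m ?B) *\<^sub>v x = bt \<cdot>\<^sub>v (?B *\<^sub>v x)" by (rule smult_mat_vec, use x B Li in simp)
    also have "1\<^sub>m k *\<^sub>v x = x" using x by simp
    finally have eq: "?M *\<^sub>v x = x - bt \<cdot>\<^sub>v (?B *\<^sub>v x) + E (Suc n) *\<^sub>v x" .
    have "vnorm x - vnorm (bt \<cdot>\<^sub>v (?B *\<^sub>v x)) - vnorm (E (Suc n) *\<^sub>v x) \<le> vnorm (?M *\<^sub>v x)"
      unfolding eq by (rule vnorm_lower3[of _ k], use x E[of "Suc n"] B in auto)
    moreover have "vnorm (E (Suc n) *\<^sub>v x) \<le> dl / lamk * vnorm x"
      using spec_norm_upper[of x "E (Suc n)"] x E[of "Suc n"] mult_right_mono[OF Eb[of "Suc n"] vnorm_nonneg[of x]] by simp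
    moreover have "vnorm (bt \<cdot>\<^sub>v (?B *\<^sub>v x)) \<le> bt * (1 / (lamk * rseq a bt r1 n)) * vnorm x"
    proof -
      have "vnorm (?B *\<^sub>v x) \<le> spec_norm ?B * vnorm x" by (rule spec_norm_upper, use x B Li in simp)
      also have "\<dots> \<le> 1 / (lamk * rseq a bt r1 n) * vnorm x" by (rule mult_right_mono[OF Bn vnorm_nonneg])
      finally have h: "vnorm (?B *\<^sub>v x) \<le> 1 / (lamk * rseq a bt r1 n) * vnorm x" .
      have "vnorm (bt \<cdot>\<^sub>v (?B *\<^sub>v x)) = bt * vnorm (?B *\<^sub>v x)" using bt by (simp add: vnorm_smult)
      also have "\<dots> \<le> bt * (1 / (lamk * rseq a bt r1 n) * vnorm x)" by (rule mult_left_mono[OF h bt])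
      finally show ?thesis by (simp add: mult.assoc)
    qed
    ultimately have "(1 - bt / (lamk * rseq a bt r1 n) - dl / lamk) * vnorm x \<le> vnorm (?M *\<^sub>v x)"
      by (simp add: algebra_simps)
    moreover have "1 - bt / (lamk * rseq a bt r1 n) - dl / lamk = mu"
      unfolding mu_def a using lamk rn by (simp add: field_simps)
    ultimately show ?thesis by simp
  qed
  note R = inv_lower_all[OF M mu low] inv_lower[OF M mu low]
  have GS: "Gmat bt L E (Suc n) = minv ?M" using L by simp
  show ?case unfolding GS using R lamk rpos[of "Suc n"] unfolding mu_def by simp
qed


lemma cancel_left: fixes A B X :: "real mat" assumes A: "A \<in> carrier_mat k k" and B: "B \<in> carrier_mat k k" and X: "X \<in> carrier_mat k m"
  and AB: "A * B = 1\<^sub>m k" shows "A * (B * X) = X"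
proof -
  have "A * (B * X) = (A * B) * X" using A B X by simp
  also have "\<dots> = 1\<^sub>m k * X" using AB by simp
  also have "\<dots> = X" by (rule left_mult_one_mat[OF X])
  finally show ?thesis .
qed

lemma C_step:
  fixes L :: "real mat" and E :: "nat \<Rightarrow> real mat"
  assumes L: "L \<in> carrier_mat k k" and Li: "minv L \<in> carrier_mat k k" "spec_norm (minv L) \<le> 1 / lamk"
    and LLi: "L * minv L = 1\<^sub>m k"
    and lamk: "lamk > 0" and bt: "bt \<ge> 0"
    and E: "\<And>n. E n \<in> carrier_mat k k" and Eb: "\<And>n. spec_norm (E n) \<le> dl / lamk"
    and r1: "r1 = lamk / 2 - dl" and a: "a = lamk - dl"
    and rpos: "\<And>n. rseq a bt r1 n > 0"
    and IH: "Cmat L (Gmat bt L E) t \<in> carrier_mat k k" "minv (Cmat L (Gmat bt L E) t) \<in> carrier_mat k k"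
     "Cmat L (Gmat bt L E) t * minv (Cmat L (Gmat bt L E) t) = 1\<^sub>m k"
  shows "Cmat L (Gmat bt L E) (Suc t) \<in> carrier_mat k k" "minv (Cmat L (Gmat bt L E) (Suc t)) \<in> carrier_mat k k"
     "Cmat L (Gmat bt L E) (Suc t) * minv (Cmat L (Gmat bt L E) (Suc t)) = 1\<^sub>m k"
     "minv (Cmat L (Gmat bt L E) (Suc t)) = minv (Cmat L (Gmat bt L E) t) * Gmat bt L E t * minv L"
proof -
  let ?C = "Cmat L (Gmat bt L E) t" and ?Ci = "minv (Cmat L (Gmat bt L E) t)" and ?G = "Gmat bt L E t"
  let ?M = "minv ?G"
  note GP = G_props[OF L Li lamk bt E Eb r1 a rpos, where n = t]
  have G: "?G \<in> carrier_mat k k" using GP[THEN conjunct1] .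
  have MG: "?M * ?G = 1\<^sub>m k" using GP[THEN conjunct2, THEN conjunct2, THEN conjunct1] .
  have M: "?M \<in> carrier_mat k k" using minv_carrier[of ?G] G by simp
  have C: "?C \<in> carrier_mat k k" "?Ci \<in> carrier_mat k k" "?C * ?Ci = 1\<^sub>m k" using IH by auto
  have CS: "Cmat L (Gmat bt L E) (Suc t) = L * ?M * ?C" by simp
  have CSc: "L * ?M * ?C \<in> carrier_mat k k" using L M C by simp
  have N: "?Ci * ?G * minv L \<in> carrier_mat k k" using C G Li by simp
  have GL: "?G * minv L \<in> carrier_mat k k" using G Li by simp
  have CGL: "?Ci * (?G * minv L) \<in> carrier_mat k k" using C GL by simp
  have "(L * ?M * ?C) * (?Ci * ?G * minv L) = (L * (?M * ?C)) * (?Ci * (?G * minv L))"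
    using assoc_mult_mat[OF L M C(1)] assoc_mult_mat[OF C(2) G Li(1)] by simp
  also have "\<dots> = L * ((?M * ?C) * (?Ci * (?G * minv L)))"
    by (rule assoc_mult_mat[OF L _ CGL], use M C in simp)
  also have "(?M * ?C) * (?Ci * (?G * minv L)) = ?M * (?C * (?Ci * (?G * minv L)))"
    by (rule assoc_mult_mat[OF M C(1) CGL])
  also have "?C * (?Ci * (?G * minv L)) = ?G * minv L" using cancel_left[OF C(1,2) GL C(3)] .
  also have "?M * (?G * minv L) = minv L" by (rule cancel_left[OF M G Li(1) MG])
  finally have prod1: "(L * ?M * ?C) * (?Ci * ?G * minv L) = 1\<^sub>m k" using LLi by simp
  show eq: "minv (Cmat L (Gmat bt L E) (Suc t)) = ?Ci * ?G * minv L"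
    unfolding CS by (rule minv_eq[OF CSc N prod1])
  show "Cmat L (Gmat bt L E) (Suc t) \<in> carrier_mat k k" using CSc CS by simp
  show "minv (Cmat L (Gmat bt L E) (Suc t)) \<in> carrier_mat k k" using N eq by simp
  show "Cmat L (Gmat bt L E) (Suc t) * minv (Cmat L (Gmat bt L E) (Suc t)) = 1\<^sub>m k"
    by (subst eq, subst CS, rule prod1)
qed

lemma C_props:
  fixes L :: "real mat" and E :: "nat \<Rightarrow> real mat"
  assumes L: "L \<in> carrier_mat k k" and Li: "minv L \<in> carrier_mat k k" "spec_norm (minv L) \<le> 1 / lamk"
    and LLi: "L * minv L = 1\<^sub>m k"
    and lamk: "lamk > 0" and bt: "bt \<ge> 0"
    and E: "\<And>n. E n \<in> carrier_mat k k" and Eb: "\<And>n. spec_norm (E n) \<le> dl / lamk"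
    and r1: "r1 = lamk / 2 - dl" and a: "a = lamk - dl"
    and rpos: "\<And>n. rseq a bt r1 n > 0"
  shows "Cmat L (Gmat bt L E) t \<in> carrier_mat k k \<and> minv (Cmat L (Gmat bt L E) t) \<in> carrier_mat k k
     \<and> Cmat L (Gmat bt L E) t * minv (Cmat L (Gmat bt L E) t) = 1\<^sub>m k
     \<and> minv (Cmat L (Gmat bt L E) (Suc t)) = minv (Cmat L (Gmat bt L E) t) * Gmat bt L E t * minv L"
proof -
  note CS = C_step[OF L Li LLi lamk bt E Eb r1 a rpos]
  have P: "Cmat L (Gmat bt L E) t \<in> carrier_mat k k \<and> minv (Cmat L (Gmat bt L E) t) \<in> carrier_mat k k
     \<and> Cmat L (Gmat bt L E) t * minv (Cmat L (Gmat bt L E) t) = 1\<^sub>m k" for t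
  proof (induction t)
    case 0
    have "minv (1\<^sub>m k) = 1\<^sub>m k" by (rule minv_eq, auto)
    moreover have "Cmat L (Gmat bt L E) 0 = 1\<^sub>m k" using L by simp
    ultimately show ?case by simp
  next
    case (Suc t)
    hence h: "Cmat L (Gmat bt L E) t \<in> carrier_mat k k" "minv (Cmat L (Gmat bt L E) t) \<in> carrier_mat k k"
      "Cmat L (Gmat bt L E) t * minv (Cmat L (Gmat bt L E) t) = 1\<^sub>m k" by auto
    show ?case using CS(1-3)[OF h] by simp
  qed
  have h: "Cmat L (Gmat bt L E) t \<in> carrier_mat k k" "minv (Cmat L (Gmat bt L E) t) \<in> carrier_mat k k"
      "Cmat L (Gmat bt L E) t * minv (Cmat L (Gmat bt L E) t) = 1\<^sub>m k" using P[of t] by auto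
  show ?thesis using h CS(4)[OF h] by simp
qed

lemma chain:
  fixes L :: "real mat" and E :: "nat \<Rightarrow> real mat"
  assumes L: "L \<in> carrier_mat k k" and Li: "minv L \<in> carrier_mat k k" "spec_norm (minv L) \<le> 1 / lamk"
    and LLi: "L * minv L = 1\<^sub>m k"
    and lamk: "lamk > 0" and bt: "bt \<ge> 0"
    and E: "\<And>n. E n \<in> carrier_mat k k" and Eb: "\<And>n. spec_norm (E n) \<le> dl / lamk"
    and r1: "r1 = lamk / 2 - dl" and a: "a = lamk - dl"
    and rpos: "\<And>n. rseq a bt r1 n > 0"
  shows "spec_norm (Cmat L (Gmat bt L E) m * minv (Cmat L (Gmat bt L E) (m + n)))
          \<le> 1 / (\<Prod>i\<in>{m..<m+n}. rseq a bt r1 i)"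
proof (induction n)
  note CP = C_props[OF L Li LLi lamk bt E Eb r1 a rpos]
  case 0
  have "Cmat L (Gmat bt L E) m * minv (Cmat L (Gmat bt L E) m) = 1\<^sub>m k" using CP[where t = m] by simp
  thus ?case using spec_norm_one[of k] by simp
next
  note CP = C_props[OF L Li LLi lamk bt E Eb r1 a rpos]
  case (Suc n)
  let ?Cm = "Cmat L (Gmat bt L E) m" and ?Ci = "minv (Cmat L (Gmat bt L E) (m + n))" and ?G = "Gmat bt L E (m + n)"
  let ?P = "\<Prod>i\<in>{m..<m+n}. rseq a bt r1 i" and ?r = "rseq a bt r1 (m + n)"
  have Cm: "?Cm \<in> carrier_mat k k" and Ci: "?Ci \<in> carrier_mat k k" using CP by auto
  have G: "?G \<in> carrier_mat k k" "spec_norm ?G \<le> lamk / ?r"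
    using G_props[OF L Li lamk bt E Eb r1 a rpos, where n = "m + n"] by auto
  have eq: "minv (Cmat L (Gmat bt L E) (m + Suc n)) = ?Ci * ?G * minv L" using CP[where t = "m + n"] by simp
  have eq2: "?Cm * (?Ci * ?G * minv L) = (?Cm * ?Ci) * ?G * minv L"
  proof -
    have "?Cm * (?Ci * ?G * minv L) = ?Cm * (?Ci * (?G * minv L))" using assoc_mult_mat[OF Ci G(1) Li(1)] by simp
    also have "\<dots> = (?Cm * ?Ci) * (?G * minv L)" using assoc_mult_mat[OF Cm Ci mult_carrier_mat[OF G(1) Li(1)]] by simp
    also have "\<dots> = (?Cm * ?Ci) * ?G * minv L" using assoc_mult_mat[OF mult_carrier_mat[OF Cm Ci] G(1) Li(1)] by simp
    finally show ?thesis .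
  qed
  have Ppos: "?P > 0" using rpos by (simp add: prod_pos)
  have rp: "?r > 0" using rpos by simp
  have "spec_norm (?Cm * minv (Cmat L (Gmat bt L E) (m + Suc n))) \<le> spec_norm (?Cm * ?Ci) * spec_norm ?G * spec_norm (minv L)"
    using spec_norm_mult3[OF mult_carrier_mat[OF Cm Ci] G(1) Li(1)] unfolding eq eq2 by simp
  also have "\<dots> \<le> (1 / ?P) * (lamk / ?r) * (1 / lamk)"
    by (intro mult_mono, use Suc G Li Ppos rp lamk in \<open>auto simp: spec_norm_nonneg\<close>)
  also have "\<dots> = 1 / (\<Prod>i\<in>{m..<m+Suc n}. rseq a bt r1 i)" using lamk by simp
  finally show ?case .
qed




theorem lemma5:
  fixes d k :: nat and eps beta :: real and lam :: "nat \<Rightarrow> real"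
    and A U :: "real mat" and X R Xi :: "nat \<Rightarrow> real mat"
  assumes dk: "d > k" "k \<ge> 1"
    and eps: "0 < eps" "eps < 1"
    and A: "A \<in> carrier_mat d d" "A\<^sup>T = A"
    and U: "U \<in> carrier_mat d d" "U\<^sup>T * U = 1\<^sub>m d"
    and eig: "\<And>i. 1 \<le> i \<Longrightarrow> i \<le> d \<Longrightarrow> A *\<^sub>v col U (i - 1) = lam i \<cdot>\<^sub>v col U (i - 1)"
    and lam_sorted: "\<And>i j. 1 \<le> i \<Longrightarrow> i \<le> j \<Longrightarrow> j \<le> d \<Longrightarrow> lam j \<le> lam i"
    and lam_nonneg: "lam d \<ge> 0"
    and gap: "lam k > lam (k + 1)"
    and beta: "beta > 0" "lam k > 2 * sqrt beta" "2 * sqrt beta \<ge> lam (k + 1)"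
    and X0: "X 0 \<in> carrier_mat d k" "(X 0)\<^sup>T * X 0 = 1\<^sub>m k"
    and cos0: "cos_theta (Ufirst U k) (X 0) > 0"
    and Xi_dim: "\<And>t. Xi t \<in> carrier_mat d k"
    and QR1: "is_QR ((1/2) \<cdot>\<^sub>m (A * X 0) + Xi 0) (X 1) (R 1)"
    and QRt: "\<And>t. t \<ge> 1 \<Longrightarrow>
       is_QR (A * X t - beta \<cdot>\<^sub>m (X (t - 1) * minv (R t)) + Xi t) (X (t + 1)) (R (t + 1))"
    and pert1: "\<And>t. spec_norm ((Urest U k)\<^sup>T * Xi t) \<le> (1/32) * (lam k - 2 * sqrt beta) * eps"
    and pert2: "\<And>t. spec_norm ((Ufirst U k)\<^sup>T * Xi t)
                    \<le> (1/32) * (lam k - 2 * sqrt beta) * cos_theta (Ufirst U k) (X t)"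
  shows "\<forall>t \<ge> 1. \<forall>s < t.
     (let c = (1/32::real); c1 = (31/15::real);
          lamp = (lam k + sqrt (lam k ^ 2 - 4 * beta)) / 2;
          L = Lfirst lam k;
          G = Gmat beta L (\<lambda>t. Emat L (Ufirst U k) (Xi t) (X t));
          C = Cmat L G
      in spec_norm (minv (C t)) \<le> c1 / ((1 - c) * lamp + c * sqrt beta) ^ t
       \<and> spec_norm (C (t - 1 - s) * minv (C t)) \<le> c1 / ((1 - c) * lamp + c * sqrt beta) ^ (s + 1)
       \<and> spec_norm (pmat beta (Lrest lam d k) t) \<le> sqrt beta ^ t
       \<and> spec_norm (qmat beta (Lrest lam d k) t) \<le> real (t + 1) * sqrt beta ^ t)"
proof (intro allI impI)
  fix t sx :: nat
  assume t1: "t \<ge> 1" and st: "sx < t"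
  define sb where "sb = sqrt beta"
  have sb: "sb > 0" "sb^2 = beta" unfolding sb_def using beta(1) by auto
  define lk where "lk = lam k"
  have lk: "lk > 2 * sb" unfolding lk_def sb_def using beta(2) by simp
  have lkpos: "lk > 0" using lk sb by simp
  define dl where "dl = (lk - 2 * sb) / 32"
  define a where "a = lk - dl"
  define r1 where "r1 = lk / 2 - dl"
  define rho where "rho = (1 - 1/32) * ((lk + sqrt (lk^2 - 4 * sb^2)) / 2) + 1/32 * sb"
  note CO = consts_ok[OF sb(1) lk]
  have r1p: "r1 > 0" and q1: "r1^2 - a * r1 + sb^2 \<le> 0" and qr: "rho^2 - a * rho + sb^2 \<le> 0" and rhop: "rho > 0"
    using CO unfolding a_def r1_def rho_def dl_def by auto
  obtain xm xp where xmp: "xm \<ge> 0" "xp \<ge> 0" "xm + xp = a" "xm * xp = sb^2" "31 * r1 - 15 * rho \<ge> 16 * xm"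
    using CO(5) unfolding a_def r1_def rho_def dl_def by blast
  have q1b: "r1^2 - a * r1 + beta \<le> 0" using q1 sb(2) by simp
  have qrb: "rho^2 - a * rho + beta \<le> 0" using qr sb(2) by simp
  have xb: "xm * xp = beta" using xmp(4) sb(2) by simp
  have b0: "beta \<ge> 0" using beta(1) by simp
  have rpos: "rseq a beta r1 n > 0" for n using rseq_ge[OF r1p b0 q1b, of n] r1p by simp
  have prodl: "(\<Prod>i\<in>{m..<m+n}. rseq a beta r1 i) \<ge> 15/31 * rho ^ n" for m n
    by (rule rseq_prod_lower[OF r1p b0 q1b xmp(1,2,3) xb qrb _ xmp(5)], use rhop in simp)
  define L where "L = Lfirst lam k"
  have Ld: "L = diagm k (\<lambda>i. lam (i + 1))" unfolding L_def Lfirst_def diagm_def ..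
  have lami: "lam (i + 1) \<ge> lk" if "i < k" for i unfolding lk_def using lam_sorted[of "i+1" k] that dk by simp
  have Lc: "L \<in> carrier_mat k k" unfolding Ld by simp
  have LLi0: "L * diagm k (\<lambda>i. 1 / lam (i + 1)) = 1\<^sub>m k"
    unfolding Ld diagm_mult diagm_one
    by (rule eq_matI, use lami lkpos in \<open>auto simp: diagm_def\<close>) (smt (verit) lami lkpos)
  have Linv: "minv L = diagm k (\<lambda>i. 1 / lam (i + 1))" by (rule minv_eq[OF Lc _ LLi0], simp)
  have Lic: "minv L \<in> carrier_mat k k" unfolding Linv by simp
  have LLi: "L * minv L = 1\<^sub>m k" unfolding Linv by (rule LLi0)
  have Lin: "spec_norm (minv L) \<le> 1 / lk" unfolding Linv
  proof (rule spec_norm_diagm)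
    show "0 \<le> 1 / lk" using lkpos by simp
    fix i assume "i < k"
    hence "lam (i + 1) \<ge> lk" by (rule lami)
    thus "\<bar>1 / lam (i + 1)\<bar> \<le> 1 / lk" using lkpos by (simp add: frac_le)
  qed
  have Xt: "X n \<in> carrier_mat d k \<and> (X n)\<^sup>T * X n = 1\<^sub>m k" for n
  proof (cases n)
    case 0 thus ?thesis using X0 by simp
  next
    case (Suc n')
    show ?thesis
    proof (cases n')
      case 0
      thus ?thesis using QR1 Xi_dim[of 0] Suc unfolding is_QR_def by simp
    next
      case (Suc n'')
      have "is_QR (A * X n' - beta \<cdot>\<^sub>m (X (n' - 1) * minv (R n')) + Xi n') (X (n' + 1)) (R (n' + 1))"
        by (rule QRt, use Suc in simp)
      thus ?thesis using Xi_dim[of n'] \<open>n = Suc n'\<close> unfolding is_QR_def by simp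
    qed
  qed
  define E where "E = (\<lambda>t. Emat L (Ufirst U k) (Xi t) (X t))"
  have Uk: "Ufirst U k \<in> carrier_mat d k" using U by (simp add: Ufirst_def)
  have Ec: "E n \<in> carrier_mat k k" for n
  proof -
    have W: "(Ufirst U k)\<^sup>T * X n \<in> carrier_mat k k" using Uk Xt[of n] by simp
    have "minv ((Ufirst U k)\<^sup>T * X n) \<in> carrier_mat k k" using minv_carrier[of "(Ufirst U k)\<^sup>T * X n"] W Uk by simp
    moreover have "(Ufirst U k)\<^sup>T * Xi n \<in> carrier_mat k k"
      using mult_carrier_mat[of "(Ufirst U k)\<^sup>T" k d "Xi n" k] Uk Xi_dim[of n] by simp
    ultimately show ?thesis unfolding E_def Emat_def using Lic
      by (meson mult_carrier_mat)
  qed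
  have Eb: "spec_norm (E n) \<le> dl / lk" for n
  proof -
    have "spec_norm (E n) \<le> (1/32) * (lk - 2 * sb) / lk" unfolding E_def
      by (rule E_bound[OF Lic Lin lkpos _ Uk Xi_dim[of n] _ dk(2)],
          use lk Xt[of n] sigma_le1[OF U _ dk(2), of "X n"] dk pert2[of n] in \<open>auto simp: lk_def sb_def\<close>)
    thus ?thesis unfolding dl_def by simp
  qed
  have r1d: "r1 = lk / 2 - dl" and ad: "a = lk - dl" unfolding r1_def a_def by auto
  note CH = chain[OF Lc Lic Lin LLi lkpos b0 Ec Eb r1d ad rpos] 
  have CH': "spec_norm (Cmat L (Gmat beta L E) m * minv (Cmat L (Gmat beta L E) (m + n))) \<le> (31/15) / rho ^ n" for m n
  proof -
    have "spec_norm (Cmat L (Gmat beta L E) m * minv (Cmat L (Gmat beta L E) (m + n)))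
       \<le> 1 / (\<Prod>i\<in>{m..<m+n}. rseq a beta r1 i)" using CH beta(1) by simp
    also have "\<dots> \<le> 1 / (15/31 * rho ^ n)" by (rule divide_left_mono[OF prodl], use rhop rpos in \<open>simp_all add: prod_pos\<close>)
    finally show ?thesis by simp
  qed
  have C0: "Cmat L (Gmat beta L E) 0 = 1\<^sub>m k" using Lc by simp
  have Cic: "minv (Cmat L (Gmat beta L E) t) \<in> carrier_mat k k"
    using C_props[OF Lc Lic Lin LLi lkpos b0 Ec Eb r1d ad rpos, where t = t] by simp
  have claim1: "spec_norm (minv (Cmat L (Gmat beta L E) t)) \<le> (31/15) / rho ^ t"
    using CH'[of 0 t] C0 Cic by simp
  have claim2: "spec_norm (Cmat L (Gmat beta L E) (t - 1 - sx) * minv (Cmat L (Gmat beta L E) t)) \<le> (31/15) / rho ^ (sx + 1)"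
    using CH'[of "t - 1 - sx" "sx + 1"] st by simp
  have Lr: "Lrest lam d k = diagm (d - k) (\<lambda>i. lam (k + 1 + i))" unfolding Lrest_def diagm_def ..
  have xr: "0 \<le> lam (k + 1 + i) \<and> lam (k + 1 + i) \<le> 2 * sb" if "i < d - k" for i
  proof -
    have "lam d \<le> lam (k + 1 + i)" using lam_sorted[of "k+1+i" d] that by simp
    moreover have "lam (k + 1 + i) \<le> lam (k + 1)" using lam_sorted[of "k+1" "k+1+i"] that by simp
    ultimately show ?thesis using lam_nonneg beta(3) unfolding sb_def by simp
  qed
  have claim3: "spec_norm (pmat beta (Lrest lam d k) t) \<le> sqrt beta ^ t"
    unfolding Lr pmat_diagm sb(2)[symmetric] sb_def[symmetric]
    by (rule spec_norm_diagm, use sb xr pp_bound[OF sb(1)] in auto)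
  have claim4: "spec_norm (qmat beta (Lrest lam d k) t) \<le> real (t + 1) * sqrt beta ^ t"
    unfolding Lr qmat_diagm sb(2)[symmetric] sb_def[symmetric]
    by (rule spec_norm_diagm, use sb xr qq_bound[OF sb(1)] in auto)
  have rho_eq: "(1 - 1/32) * ((lam k + sqrt (lam k ^ 2 - 4 * beta)) / 2) + 1/32 * sqrt beta = rho"
    unfolding rho_def lk_def sb_def using beta(1) by simp
  show "let c = (1/32::real); c1 = (31/15::real);
          lamp = (lam k + sqrt (lam k ^ 2 - 4 * beta)) / 2;
          L = Lfirst lam k;
          G = Gmat beta L (\<lambda>t. Emat L (Ufirst U k) (Xi t) (X t));
          C = Cmat L G
      in spec_norm (minv (C t)) \<le> c1 / ((1 - c) * lamp + c * sqrt beta) ^ t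
       \<and> spec_norm (C (t - 1 - sx) * minv (C t)) \<le> c1 / ((1 - c) * lamp + c * sqrt beta) ^ (sx + 1)
       \<and> spec_norm (pmat beta (Lrest lam d k) t) \<le> sqrt beta ^ t
       \<and> spec_norm (qmat beta (Lrest lam d k) t) \<le> real (t + 1) * sqrt beta ^ t"
    unfolding Let_def rho_eq L_def[symmetric] E_def[symmetric] using claim1 claim2 claim3 claim4 by simp
qed


end
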